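(* Let $\mu,\nu$ be finite measures on $\mathbb R$ with finite first moments, and suppose $\mu\le_E\nu$. Then $(P_\nu-P_\mu)^c\in\mathcal D(\nu(\mathbb R)-\mu(\mathbb R),\overline{\nu}-\overline{\mu})$.
   Context: For a finite measure $\eta$ on $\mathbb R$ with finite first moment, $\overline\eta=\int x\,\eta(dx)$ and $P_\eta(k)=\int(k-x)^+\eta(dx)$, $k\in\mathbb R$. We write $\mu\le_E\nu$ (extended convex order) if $\int f\,d\mu\le\int f\,d\nu$ for all non-negative convex $f:\mathbb R\to\mathbb R_+$. For $u:\mathbb R\to\mathbb R$, $u^c$ is the largest convex function below $u$. For $\alpha\ge0,\beta\in\mathbb R$, $\mathcal D(\alpha,\beta)$ is the set of increasing convex functions $f:\mathbb R\to\mathbb R_+$ with $\lim_{z\to-\infty}f(z)=0$ and $\lim_{z\to\infty}\{f(z)-(\alpha z-\beta)\}=0$. *)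

theory Defs
  imports "HOL-Probability.Probability"
begin

definition fin_meas_fm :: "real measure \<Rightarrow> bool" where
  "fin_meas_fm M \<longleftrightarrow> sets M = sets borel \<and> finite_measure M \<and> integrable M (\<lambda>x. x)"

definition bary :: "real measure \<Rightarrow> real" where
  "bary M = (\<integral>x. x \<partial>M)"

definition put_fn :: "real measure \<Rightarrow> real \<Rightarrow> real" where
  "put_fn M k = (\<integral>x. max (k - x) 0 \<partial>M)"

text \<open>Extended convex order: integrals of non-negative convex functions
  (possibly infinite, hence taken as non-negative integrals).\<close>
definition ext_cx_le :: "real measure \<Rightarrow> real measure \<Rightarrow> bool" where
  "ext_cx_le M N \<longleftrightarrow>
     (\<forall>f::real \<Rightarrow> real. convex_on UNIV f \<and> (\<forall>x. 0 \<le> f x) \<longrightarrow>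
        (\<integral>\<^sup>+ x. ennreal (f x) \<partial>M) \<le> (\<integral>\<^sup>+ x. ennreal (f x) \<partial>N))"

definition convex_minorant :: "(real \<Rightarrow> real) \<Rightarrow> real \<Rightarrow> real" where
  "convex_minorant u x = Sup {g x | g. convex_on UNIV g \<and> (\<forall>y. g y \<le> u y)}"

definition classD :: "real \<Rightarrow> real \<Rightarrow> (real \<Rightarrow> real) set" where
  "classD \<alpha> \<beta> = {f. mono f \<and> convex_on UNIV f \<and> (\<forall>z. 0 \<le> f z) \<and>
      (f \<longlongrightarrow> 0) at_bot \<and> ((\<lambda>z. f z - (\<alpha> * z - \<beta>)) \<longlongrightarrow> 0) at_top}"

end

theory Submission
  imports Defs "HOL-Real_Asymp.Real_Asymp"
begin

lemma convex_max_affine: "convex_on UNIV (\<lambda>x::real. max (a * x + b) 0)"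
proof (rule convex_onI)
  fix t x y :: real assume t: "0 < t" "t < 1"
  have e: "a * ((1 - t) *\<^sub>R x + t *\<^sub>R y) + b = (1 - t) * (a*x+b) + t * (a*y+b)"
    by (simp add: algebra_simps)
  have 1: "(1 - t) * (a*x+b) \<le> (1 - t) * max (a*x+b) 0"
    using t by (intro mult_left_mono) auto
  have 2: "t * (a*y+b) \<le> t * max (a*y+b) 0"
    using t by (intro mult_left_mono) auto
  have 3: "0 \<le> (1 - t) * max (a*x+b) 0 + t * max (a*y+b) 0"
    using t by auto
  show "max (a * ((1 - t) *\<^sub>R x + t *\<^sub>R y) + b) 0 \<le> (1 - t) * max (a * x + b) 0 + t * max (a * y + b) 0"
    unfolding e using 1 2 3 by linarith
qed simp

lemma fin_props:
  assumes "fin_meas_fm M"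
  shows "finite_measure M" "integrable M (\<lambda>x. x)" "space M = UNIV" "sets M = sets borel"
  using assms unfolding fin_meas_fm_def by (auto dest: sets_eq_imp_space_eq)

lemma integrable_maxs:
  assumes "fin_meas_fm M"
  shows "integrable M (\<lambda>x. max (k - x) 0)" "integrable M (\<lambda>x. max (x - k) 0)"
proof -
  interpret finite_measure M using fin_props[OF assms] by simp
  have i: "integrable M (\<lambda>x. x)" using fin_props[OF assms] by simp
  show "integrable M (\<lambda>x. max (k - x) 0)" "integrable M (\<lambda>x. max (x - k) 0)"
    using i by (auto intro!: integrable_max integrable_diff)
qed

lemma ext_le:
  assumes "fin_meas_fm \<mu>" "fin_meas_fm \<nu>" "ext_cx_le \<mu> \<nu>"
    and "convex_on UNIV f" "\<And>x. 0 \<le> f x" "integrable \<mu> f" "integrable \<nu> f"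
  shows "(\<integral>x. f x \<partial>\<mu>) \<le> (\<integral>x. f x \<partial>\<nu>)"
proof -
  have "(\<integral>\<^sup>+ x. ennreal (f x) \<partial>\<mu>) \<le> (\<integral>\<^sup>+ x. ennreal (f x) \<partial>\<nu>)"
    using assms unfolding ext_cx_le_def by blast
  moreover have "(\<integral>\<^sup>+ x. ennreal (f x) \<partial>\<mu>) = ennreal (\<integral>x. f x \<partial>\<mu>)"
    using assms by (intro nn_integral_eq_integral) auto
  moreover have "(\<integral>\<^sup>+ x. ennreal (f x) \<partial>\<nu>) = ennreal (\<integral>x. f x \<partial>\<nu>)"
    using assms by (intro nn_integral_eq_integral) auto
  moreover have "0 \<le> (\<integral>x. f x \<partial>\<nu>)" using assms by auto
  ultimately show ?thesis by (simp add: ennreal_le_iff)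
qed

lemma put_lim:
  assumes "fin_meas_fm M"
  shows "(put_fn M \<longlongrightarrow> 0) at_bot"
proof -
  have i: "integrable M (\<lambda>x. x)" using fin_props[OF assms] by simp
  have s: "sets M = sets borel" using fin_props[OF assms] by simp
  have "((\<lambda>t. \<integral>x. max (- t - x) 0 \<partial>M) \<longlongrightarrow> (\<integral>x. 0 \<partial>M)) at_top"
  proof (rule integral_dominated_convergence_at_top[where w="\<lambda>x. \<bar>x\<bar>"])
    show "(\<lambda>x. 0::real) \<in> borel_measurable M" by simp
    show "\<And>t. (\<lambda>x. max (- t - x) 0) \<in> borel_measurable M"
      unfolding measurable_cong_sets[OF s refl] by measurable
    show "integrable M (\<lambda>x. \<bar>x\<bar>)" using i by simp
    show "AE x in M. ((\<lambda>t. max (- t - x) 0) \<longlongrightarrow> 0) at_top"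
    proof (intro AE_I2 tendsto_eventually)
      fix x :: real
      show "\<forall>\<^sub>F t in at_top. max (- t - x) 0 = 0"
        using eventually_ge_at_top[of "-x"] by eventually_elim auto
    qed
    show "\<forall>\<^sub>F t in at_top. AE x in M. norm (max (- t - x) 0) \<le> \<bar>x\<bar>"
      using eventually_ge_at_top[of "0::real"] by eventually_elim (intro AE_I2, simp)
  qed
  then show ?thesis
    unfolding filterlim_at_bot_mirror put_fn_def by simp
qed

lemma call_lim:
  assumes "fin_meas_fm M"
  shows "((\<lambda>k. \<integral>x. max (x - k) 0 \<partial>M) \<longlongrightarrow> 0) at_top"
proof -
  have i: "integrable M (\<lambda>x. x)" using fin_props[OF assms] by simp
  have s: "sets M = sets borel" using fin_props[OF assms] by simp
  have "((\<lambda>t. \<integral>x. max (x - t) 0 \<partial>M) \<longlongrightarrow> (\<integral>x. 0 \<partial>M)) at_top"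
  proof (rule integral_dominated_convergence_at_top[where w="\<lambda>x. \<bar>x\<bar>"])
    show "(\<lambda>x. 0::real) \<in> borel_measurable M" by simp
    show "\<And>t. (\<lambda>x. max (x - t) 0) \<in> borel_measurable M"
      unfolding measurable_cong_sets[OF s refl] by measurable
    show "integrable M (\<lambda>x. \<bar>x\<bar>)" using i by simp
    show "AE x in M. ((\<lambda>t. max (x - t) 0) \<longlongrightarrow> 0) at_top"
    proof (intro AE_I2 tendsto_eventually)
      fix x :: real
      show "\<forall>\<^sub>F t in at_top. max (x - t) 0 = 0"
        using eventually_ge_at_top[of "x"] by eventually_elim auto
    qed
    show "\<forall>\<^sub>F t in at_top. AE x in M. norm (max (x - t) 0) \<le> \<bar>x\<bar>"
      using eventually_ge_at_top[of "0::real"] by eventually_elim (intro AE_I2, simp)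
  qed
  then show ?thesis by simp
qed

lemma put_call:
  assumes "fin_meas_fm M"
  shows "put_fn M k = k * measure M UNIV - bary M + (\<integral>x. max (x - k) 0 \<partial>M)"
proof -
  interpret finite_measure M using fin_props[OF assms] by simp
  have i: "integrable M (\<lambda>x. x)" and sp: "space M = UNIV" using fin_props[OF assms] by auto
  have "put_fn M k = (\<integral>x. (k - x) + max (x - k) 0 \<partial>M)"
    unfolding put_fn_def by (rule Bochner_Integration.integral_cong) auto
  also have "\<dots> = (\<integral>x. (k - x) \<partial>M) + (\<integral>x. max (x - k) 0 \<partial>M)"
    using i integrable_maxs[OF assms] by (intro Bochner_Integration.integral_add) auto
  also have "(\<integral>x. (k - x) \<partial>M) = k * measure M UNIV - bary M"
    using i sp unfolding bary_def by (subst Bochner_Integration.integral_diff) auto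
  finally show ?thesis .
qed


lemma cm_upper:
  assumes "convex_on UNIV g" "\<And>y. g y \<le> u y"
  shows "g x \<le> convex_minorant u x"
  unfolding convex_minorant_def
  by (rule cSup_upper) (use assms in \<open>auto intro!: bdd_aboveI[of _ "u x"]\<close>)

lemma cm_le:
  assumes "convex_on UNIV g0" "\<And>y. g0 y \<le> u y"
  shows "convex_minorant u x \<le> u x"
  unfolding convex_minorant_def
  by (rule cSup_least) (use assms in auto)

lemma cm_convex:
  assumes "convex_on UNIV g0" "\<And>y. g0 y \<le> u y"
  shows "convex_on UNIV (convex_minorant u)"
proof (rule convex_onI)
  fix t x y :: real assume t: "0 < t" "t < 1"
  show "convex_minorant u ((1 - t) *\<^sub>R x + t *\<^sub>R y) \<le> (1 - t) * convex_minorant u x + t * convex_minorant u y"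
    unfolding convex_minorant_def[of u "(1 - t) *\<^sub>R x + t *\<^sub>R y"]
  proof (rule cSup_least)
    show "{g ((1 - t) *\<^sub>R x + t *\<^sub>R y) |g. convex_on UNIV g \<and> (\<forall>y. g y \<le> u y)} \<noteq> {}"
      using assms by auto
    fix v assume "v \<in> {g ((1 - t) *\<^sub>R x + t *\<^sub>R y) |g. convex_on UNIV g \<and> (\<forall>y. g y \<le> u y)}"
    then obtain g where g: "convex_on UNIV g" "\<And>y. g y \<le> u y" and v: "v = g ((1 - t) *\<^sub>R x + t *\<^sub>R y)"
      by auto
    have "v \<le> (1 - t) * g x + t * g y" unfolding v using convex_onD[OF g(1)] t by auto
    also have "\<dots> \<le> (1 - t) * convex_minorant u x + t * convex_minorant u y"
      using cm_upper[OF g] t by (intro add_mono mult_left_mono) auto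
    finally show "v \<le> (1 - t) * convex_minorant u x + t * convex_minorant u y" .
  qed
qed simp

lemma mono_conv:
  fixes f :: "real \<Rightarrow> real"
  assumes "convex_on UNIV f" "(f \<longlongrightarrow> 0) at_bot"
  shows "mono f"
proof (rule monoI)
  fix x y :: real assume "x \<le> y"
  show "f x \<le> f y"
  proof (cases "x = y")
    case True then show ?thesis by simp
  next
    case False
    with \<open>x \<le> y\<close> have xy: "x < y" by simp
    have l1: "((\<lambda>z. (y - x) / (y - z)) \<longlongrightarrow> 0) at_bot" by real_asymp
    have l2: "((\<lambda>z. (x - z) / (y - z)) \<longlongrightarrow> 1) at_bot" by real_asymp
    have "((\<lambda>z. (y - x) / (y - z) * f z + (x - z) / (y - z) * f y) \<longlongrightarrow> 0 * 0 + 1 * f y) at_bot"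
      by (intro tendsto_intros l1 l2 assms(2))
    moreover have "\<forall>\<^sub>F z in at_bot. f x \<le> (y - x) / (y - z) * f z + (x - z) / (y - z) * f y"
      using eventually_le_at_bot[of "x - 1"]
    proof eventually_elim
      case (elim z)
      define t where "t = (x - z) / (y - z)"
      have t01: "0 \<le> t" "t \<le> 1" using elim xy unfolding t_def by (auto simp: field_simps)
      have 1: "1 - t = (y - x) / (y - z)" using elim xy unfolding t_def by (auto simp: field_simps)
      have d: "y - z \<noteq> 0" using elim xy by simp
      have "(1 - t) *\<^sub>R z + t *\<^sub>R y = ((y - x) * z + (x - z) * y) / (y - z)"
        by (simp add: 1 add_divide_distrib, simp add: t_def)
      also have "(y - x) * z + (x - z) * y = x * (y - z)" by (simp add: algebra_simps)
      also have "x * (y - z) / (y - z) = x" using d by simp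
      finally have 2: "(1 - t) *\<^sub>R z + t *\<^sub>R y = x" .
      have c: "f ((1 - t) *\<^sub>R z + t *\<^sub>R y) \<le> (1 - t) * f z + t * f y"
        by (rule convex_onD[OF assms(1) t01]) auto
      show ?case using c[unfolded 2, unfolded 1, unfolded t_def] .
    qed
    ultimately show "f x \<le> f y"
      by (auto intro: tendsto_le[OF trivial_limit_at_bot_linorder _ tendsto_const])
  qed
qed

theorem corollary2p5:
  fixes \<mu> \<nu> :: "real measure"
  assumes "fin_meas_fm \<mu>" and "fin_meas_fm \<nu>" and "ext_cx_le \<mu> \<nu>"
  shows "convex_minorant (\<lambda>k. put_fn \<nu> k - put_fn \<mu> k)
           \<in> classD (measure \<nu> UNIV - measure \<mu> UNIV) (bary \<nu> - bary \<mu>)"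
proof -
  define u where "u = (\<lambda>k. put_fn \<nu> k - put_fn \<mu> k)"
  define \<alpha> where "\<alpha> = measure \<nu> UNIV - measure \<mu> UNIV"
  define \<beta> where "\<beta> = bary \<nu> - bary \<mu>"
  define C :: "real measure \<Rightarrow> real \<Rightarrow> real" where "C = (\<lambda>M k. \<integral>x. max (x - k) 0 \<partial>M)"
  have ueq: "u k = (\<alpha> * k - \<beta>) + (C \<nu> k - C \<mu> k)" for k
    unfolding u_def \<alpha>_def \<beta>_def C_def put_call[OF assms(1)] put_call[OF assms(2)]
    by (simp add: algebra_simps)
  have Cle: "C \<mu> k \<le> C \<nu> k" for k
  proof -
    have "convex_on UNIV (\<lambda>x. max (x - k) 0)" using convex_max_affine[of 1 "-k"] by simp
    then show ?thesis unfolding C_def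
      by (intro ext_le[OF assms]) (auto intro: integrable_maxs assms)
  qed
  have Ple: "put_fn \<mu> k \<le> put_fn \<nu> k" for k
  proof -
    have "convex_on UNIV (\<lambda>x. max (k - x) 0)" using convex_max_affine[of "-1" "k"] by simp
    then show ?thesis unfolding put_fn_def
      by (intro ext_le[OF assms]) (auto intro: integrable_maxs assms)
  qed
  have lin: "convex_on UNIV (\<lambda>k. \<alpha> * k - \<beta>)"
    by (rule convex_onI) (auto simp: algebra_simps)
  have zc: "convex_on UNIV (\<lambda>k. 0::real)" by (simp add: convex_on_const)
  have u0: "0 \<le> u k" for k using Ple[of k] unfolding u_def by simp
  have ulin: "\<alpha> * k - \<beta> \<le> u k" for k using ueq[of k] Cle[of k] by simp
  define f where "f = convex_minorant u"
  have fconv: "convex_on UNIV f" unfolding f_def by (rule cm_convex[OF zc]) (use u0 in auto)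
  have f0: "0 \<le> f k" for k unfolding f_def by (rule cm_upper[OF zc]) (use u0 in auto)
  have fu: "f k \<le> u k" for k unfolding f_def by (rule cm_le[OF zc]) (use u0 in auto)
  have flin: "\<alpha> * k - \<beta> \<le> f k" for k unfolding f_def by (rule cm_upper[OF lin]) (use ulin in auto)
  have ubot: "(u \<longlongrightarrow> 0) at_bot"
    unfolding u_def using tendsto_diff[OF put_lim[OF assms(2)] put_lim[OF assms(1)]] by simp
  have fbot: "(f \<longlongrightarrow> 0) at_bot"
    by (rule tendsto_sandwich[OF _ _ tendsto_const ubot]) (use f0 fu in auto)
  have Ctop: "((\<lambda>k. C \<nu> k - C \<mu> k) \<longlongrightarrow> 0) at_top"
    unfolding C_def using tendsto_diff[OF call_lim[OF assms(2)] call_lim[OF assms(1)]] by simp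
  have ftop: "((\<lambda>z. f z - (\<alpha> * z - \<beta>)) \<longlongrightarrow> 0) at_top"
  proof (rule tendsto_sandwich[OF _ _ tendsto_const Ctop])
    show "\<forall>\<^sub>F n in at_top. 0 \<le> f n - (\<alpha> * n - \<beta>)" using flin by (auto simp: algebra_simps)
    show "\<forall>\<^sub>F n in at_top. f n - (\<alpha> * n - \<beta>) \<le> C \<nu> n - C \<mu> n"
      using fu ueq by (auto simp: algebra_simps)
  qed
  have "mono f" by (rule mono_conv[OF fconv fbot])
  then have "f \<in> classD \<alpha> \<beta>"
    unfolding classD_def using fconv f0 fbot ftop by auto
  then show ?thesis unfolding f_def u_def \<alpha>_def \<beta>_def .
qed

end
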